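(* Let $A,B\in S(2n,\mathbb{R})$, let $\{v_1,\dots,v_{2n}\}$ be a symplectic basis for $A$ and $\{w_1,\dots,w_{2n}\}$ a symplectic basis for $B$. If $v_i^TJv_j = w_i^TJw_j$ for all $1\le i<j\le 2n$ (equality of the ordered tuples of basis-values), then there exists $P\in\operatorname{Sp}(2n)$ with $A = P^TBP$.
   Context: $S(2n,\mathbb{R})$ is the set of invertible skew-symmetric real $2n\times2n$ matrices; $J$ is block-diagonal with $n$ blocks $J_0 = \begin{bmatrix} 0 & 1 \\ -1 & 0\end{bmatrix}$; $\operatorname{Sp}(2n) = \{P : P^TJP = J\}$. A basis $\{v_1,\dots,v_{2n}\}$ of $\mathbb{R}^{2n}$ is a symplectic basis for $A$ if $v_{2i-1}^TAv_{2i} = 1$ for $1\le i\le n$ and $v_i^TAv_j = 0$ for all $i<j$ with $(i,j)\neq(2k-1,2k)$ for every $k$. *)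

theory Defs
  imports "Jordan_Normal_Form.Matrix"
begin

definition skew_inv :: "nat \<Rightarrow> real mat set" where
  "skew_inv n = {A. A \<in> carrier_mat (2*n) (2*n) \<and> transpose_mat A = - A \<and> invertible_mat A}"

text \<open>Standard symplectic matrix J: block diagonal with n blocks [[0,1],[-1,0]] (0-indexed entries).\<close>
definition J_mat :: "nat \<Rightarrow> real mat" where
  "J_mat n = mat (2*n) (2*n) (\<lambda>(i,j). if even i \<and> j = i + 1 then 1
                                      else if odd i \<and> i = j + 1 then -1 else 0)"

definition Sp :: "nat \<Rightarrow> real mat set" where
  "Sp n = {P. P \<in> carrier_mat (2*n) (2*n) \<and> transpose_mat P * J_mat n * P = J_mat n}"

definition bform :: "real vec \<Rightarrow> real mat \<Rightarrow> real vec \<Rightarrow> real" where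
  "bform x A y = x \<bullet> (A *\<^sub>v y)"

definition is_basis :: "nat \<Rightarrow> (nat \<Rightarrow> real vec) \<Rightarrow> bool" where
  "is_basis n v \<longleftrightarrow>
     (\<forall>i\<in>{1..2*n}. v i \<in> carrier_vec (2*n)) \<and>
     (\<forall>c. finsum_vec TYPE(real) (2*n) (\<lambda>i. c i \<cdot>\<^sub>v v i) {1..2*n} = 0\<^sub>v (2*n)
            \<longrightarrow> (\<forall>i\<in>{1..2*n}. c i = 0)) \<and>
     (\<forall>x\<in>carrier_vec (2*n). \<exists>c. x = finsum_vec TYPE(real) (2*n) (\<lambda>i. c i \<cdot>\<^sub>v v i) {1..2*n})"

definition symplectic_basis :: "nat \<Rightarrow> real mat \<Rightarrow> (nat \<Rightarrow> real vec) \<Rightarrow> bool" where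
  "symplectic_basis n A v \<longleftrightarrow>
     is_basis n v \<and>
     (\<forall>i\<in>{1..n}. bform (v (2*i - 1)) A (v (2*i)) = 1) \<and>
     (\<forall>i j. 1 \<le> i \<and> i < j \<and> j \<le> 2*n \<and> (\<forall>k. (i, j) \<noteq> (2*k - 1, 2*k))
            \<longrightarrow> bform (v i) A (v j) = 0)"

end

theory Submission
  imports Defs "Jordan_Normal_Form.Determinant"
begin

definition Vm :: "nat \<Rightarrow> (nat \<Rightarrow> real vec) \<Rightarrow> real mat" where
  "Vm n v = mat (2*n) (2*n) (\<lambda>(r,c). v (Suc c) $ r)"

lemma Vm_carrier: "Vm n v \<in> carrier_mat (2*n) (2*n)"
  unfolding Vm_def by auto

lemma Vm_col: assumes "v (Suc c) \<in> carrier_vec (2*n)" "c < 2*n"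
  shows "col (Vm n v) c = v (Suc c)"
  using assms unfolding Vm_def by (intro eq_vecI) auto

lemma gram_entry:
  assumes V: "V \<in> carrier_mat m m" and A: "A \<in> carrier_mat m m" and r: "r < m" and c: "c < m"
  shows "(transpose_mat V * A * V) $$ (r,c) = bform (col V r) A (col V c)"
proof -
  have "transpose_mat V * A * V = transpose_mat V * (A * V)"
    using V A by (intro assoc_mult_mat[of _ m m _ m _ m]) auto
  then show ?thesis using V A r c unfolding bform_def by (simp add: col_mult2[OF A V c])
qed

lemma bform_skew:
  assumes A: "A \<in> carrier_mat m m" and sk: "transpose_mat A = - A"
    and x: "x \<in> carrier_vec m" and y: "y \<in> carrier_vec m"
  shows "bform x A y = - bform y A x"
proof -
  have "bform x A y = (transpose_mat A *\<^sub>v x) \<bullet> y"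
    unfolding bform_def using transpose_vec_mult_scalar[OF A y x] by simp
  also have "\<dots> = (- (A *\<^sub>v x)) \<bullet> y" using A x sk by simp
  also have "\<dots> = - ((A *\<^sub>v x) \<bullet> y)" using A x y by simp
  also have "(A *\<^sub>v x) \<bullet> y = y \<bullet> (A *\<^sub>v x)" using A x y by (intro comm_scalar_prod) auto
  finally show ?thesis unfolding bform_def .
qed

lemma J_carrier: "J_mat n \<in> carrier_mat (2*n) (2*n)"
  unfolding J_mat_def by auto

lemma J_skew: "transpose_mat (J_mat n) = - J_mat n"
  unfolding J_mat_def by (intro eq_matI) auto


lemma skew_eq:
  fixes M N :: "real mat"
  assumes M: "M \<in> carrier_mat m m" and N: "N \<in> carrier_mat m m"
    and sM: "\<And>r c. r < m \<Longrightarrow> c < m \<Longrightarrow> M $$ (r,c) = - M $$ (c,r)"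
    and sN: "\<And>r c. r < m \<Longrightarrow> c < m \<Longrightarrow> N $$ (r,c) = - N $$ (c,r)"
    and up: "\<And>r c. r < c \<Longrightarrow> c < m \<Longrightarrow> M $$ (r,c) = N $$ (r,c)"
  shows "M = N"
proof (rule eq_matI)
  fix r c assume r: "r < dim_row N" and c: "c < dim_col N"
  then have r: "r < m" and c: "c < m" using N by auto
  consider "r < c" | "r = c" | "c < r" by linarith
  then show "M $$ (r,c) = N $$ (r,c)"
  proof cases
    case 1 then show ?thesis using up c by auto
  next
    case 2 then show ?thesis using sM[OF r r] sN[OF r r] by auto
  next
    case 3 then show ?thesis using up[OF 3 r] sM[OF r c] sN[OF r c] by auto
  qed
qed (use M N in auto)

lemma gram_skew:
  assumes V: "\<And>c. c < 2*n \<Longrightarrow> v (Suc c) \<in> carrier_vec (2*n)"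
    and A: "A \<in> carrier_mat (2*n) (2*n)" and sk: "transpose_mat A = - A"
    and r: "r < 2*n" and c: "c < 2*n"
  shows "(transpose_mat (Vm n v) * A * Vm n v) $$ (r,c) = - (transpose_mat (Vm n v) * A * Vm n v) $$ (c,r)"
  using gram_entry[OF Vm_carrier A r c] gram_entry[OF Vm_carrier A c r]
    Vm_col[of v r n, OF V[OF r] r] Vm_col[of v c n, OF V[OF c] c] bform_skew[OF A sk V[OF r] V[OF c]] by simp

lemma gram_entry':
  assumes V: "\<And>c. c < 2*n \<Longrightarrow> v (Suc c) \<in> carrier_vec (2*n)"
    and A: "A \<in> carrier_mat (2*n) (2*n)"
    and r: "r < 2*n" and c: "c < 2*n"
  shows "(transpose_mat (Vm n v) * A * Vm n v) $$ (r,c) = bform (v (Suc r)) A (v (Suc c))"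
  using gram_entry[OF Vm_carrier A r c] Vm_col[of v r n, OF V[OF r] r] Vm_col[of v c n, OF V[OF c] c] by simp

lemma J_entry_skew: "r < 2*n \<Longrightarrow> c < 2*n \<Longrightarrow> J_mat n $$ (r,c) = - J_mat n $$ (c,r)"
  unfolding J_mat_def by auto

lemma basis_carrier: "is_basis n v \<Longrightarrow> c < 2*n \<Longrightarrow> v (Suc c) \<in> carrier_vec (2*n)"
  unfolding is_basis_def by auto

lemma gram_J:
  assumes A: "A \<in> skew_inv n" and sb: "symplectic_basis n A v"
  shows "transpose_mat (Vm n v) * A * Vm n v = J_mat n"
proof -
  have V: "\<And>c. c < 2*n \<Longrightarrow> v (Suc c) \<in> carrier_vec (2*n)"
    using sb basis_carrier unfolding symplectic_basis_def by blast
  have Ac: "A \<in> carrier_mat (2*n) (2*n)" and sk: "transpose_mat A = - A"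
    using A unfolding skew_inv_def by auto
  have one: "\<forall>i\<in>{1..n}. bform (v (2*i - 1)) A (v (2*i)) = 1"
    and zero: "\<forall>i j. 1 \<le> i \<and> i < j \<and> j \<le> 2*n \<and> (\<forall>k. (i, j) \<noteq> (2*k - 1, 2*k))
            \<longrightarrow> bform (v i) A (v j) = 0"
    using sb unfolding symplectic_basis_def by auto
  show ?thesis
  proof (rule skew_eq[of _ "2*n"])
    show "transpose_mat (Vm n v) * A * Vm n v \<in> carrier_mat (2*n) (2*n)"
      using Vm_carrier Ac by (meson mult_carrier_mat transpose_carrier_mat)
    show "J_mat n \<in> carrier_mat (2*n) (2*n)" by (rule J_carrier)
    show "\<And>r c. r < 2*n \<Longrightarrow> c < 2*n \<Longrightarrow> (transpose_mat (Vm n v) * A * Vm n v) $$ (r,c) = - (transpose_mat (Vm n v) * A * Vm n v) $$ (c,r)"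
      using gram_skew[of n v, OF V Ac sk] by blast
    show "\<And>r c. r < 2*n \<Longrightarrow> c < 2*n \<Longrightarrow> J_mat n $$ (r,c) = - J_mat n $$ (c,r)"
      by (rule J_entry_skew)
    fix r c assume rc: "r < c" and c: "c < 2*n"
    have r: "r < 2*n" using rc c by simp
    have L: "(transpose_mat (Vm n v) * A * Vm n v) $$ (r,c) = bform (v (Suc r)) A (v (Suc c))"
      by (rule gram_entry'[of n v, OF V Ac r c])
    show "(transpose_mat (Vm n v) * A * Vm n v) $$ (r,c) = J_mat n $$ (r,c)"
    proof (cases "even r \<and> c = r + 1")
      case True
      then obtain k where k: "r = 2*k" by blast
      have "Suc k \<in> {1..n}" using True k c by auto
      then have "bform (v (2*Suc k - 1)) A (v (2*Suc k)) = 1" using one by blast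
      moreover have "2*Suc k - 1 = Suc r" "2 * Suc k = Suc c" using k True by auto
      ultimately show ?thesis using L True r c unfolding J_mat_def by simp
    next
      case False
      have "\<forall>k. (Suc r, Suc c) \<noteq> (2*k - 1, 2*k)"
      proof
        fix k show "(Suc r, Suc c) \<noteq> (2*k - 1, 2*k)"
          using False rc by (cases k) auto
      qed
      then have "bform (v (Suc r)) A (v (Suc c)) = 0" using zero rc c by auto
      then show ?thesis using L False r c rc unfolding J_mat_def by simp
    qed
  qed
qed


lemma congr_mult:
  fixes X Y M :: "real mat"
  assumes X: "X \<in> carrier_mat m m" and Y: "Y \<in> carrier_mat m m" and M: "M \<in> carrier_mat m m"
  shows "transpose_mat (X*Y) * M * (X*Y) = transpose_mat Y * (transpose_mat X * M * X) * Y"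
proof -
  have "transpose_mat (X*Y) = transpose_mat Y * transpose_mat X" using X Y by (rule transpose_mult)
  then show ?thesis using X Y M
    by (simp add: assoc_mult_mat[of _ m m _ m _ m])
qed

lemma Vm_inj:
  assumes b: "is_basis n v" and x: "x \<in> carrier_vec (2*n)" and z: "Vm n v *\<^sub>v x = 0\<^sub>v (2*n)"
  shows "x = 0\<^sub>v (2*n)"
proof -
  have V: "\<And>i. i \<in> {1..2*n} \<Longrightarrow> v i \<in> carrier_vec (2*n)" using b unfolding is_basis_def by auto
  have ind: "\<forall>c. finsum_vec TYPE(real) (2*n) (\<lambda>i. c i \<cdot>\<^sub>v v i) {1..2*n} = 0\<^sub>v (2*n)
            \<longrightarrow> (\<forall>i\<in>{1..2*n}. c i = 0)" using b unfolding is_basis_def by auto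
  define c where "c i = x $ (i - 1)" for i
  have "finsum_vec TYPE(real) (2*n) (\<lambda>i. c i \<cdot>\<^sub>v v i) {1..2*n} = Vm n v *\<^sub>v x"
  proof (rule eq_vecI)
    fix r assume "r < dim_vec (Vm n v *\<^sub>v x)"
    then have r: "r < 2*n" using Vm_carrier[of n v] by simp
    have "finsum_vec TYPE(real) (2*n) (\<lambda>i. c i \<cdot>\<^sub>v v i) {1..2*n} $ r = (\<Sum>i\<in>{1..2*n}. (c i \<cdot>\<^sub>v v i) $ r)"
      using V r by (intro index_finsum_vec) auto
    also have "\<dots> = (\<Sum>i\<in>{1..2*n}. c i * v i $ r)"
    proof (rule sum.cong)
      fix i assume "i \<in> {1..2*n}"
      then have "dim_vec (v i) = 2*n" using V by auto
      then show "(c i \<cdot>\<^sub>v v i) $ r = c i * v i $ r" using r by simp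
    qed simp
    also have "\<dots> = (\<Sum>j\<in>{0..<2*n}. c (Suc j) * v (Suc j) $ r)"
    proof -
      have "{1..2*n} = Suc ` {0..<2*n}" by (auto simp: image_iff)
      then show ?thesis by (simp only:) (subst sum.reindex, auto)
    qed
    also have "\<dots> = row (Vm n v) r \<bullet> x"
      using x r unfolding scalar_prod_def c_def Vm_def by (intro sum.cong) auto
    also have "\<dots> = (Vm n v *\<^sub>v x) $ r" using r Vm_carrier[of n v] by simp
    finally show "finsum_vec TYPE(real) (2*n) (\<lambda>i. c i \<cdot>\<^sub>v v i) {1..2*n} $ r = (Vm n v *\<^sub>v x) $ r" .
  next
    show "dim_vec (finsum_vec TYPE(real) (2*n) (\<lambda>i. c i \<cdot>\<^sub>v v i) {1..2*n}) = dim_vec (Vm n v *\<^sub>v x)"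
    proof -
      have "finsum_vec TYPE(real) (2*n) (\<lambda>i. c i \<cdot>\<^sub>v v i) {1..2*n} \<in> carrier_vec (2*n)"
        using V by (intro finsum_vec_closed) (auto simp: Pi_def)
      then show ?thesis using Vm_carrier[of n v] by simp
    qed
  qed
  then have "\<forall>i\<in>{1..2*n}. c i = 0" using ind z by auto
  show ?thesis
  proof (rule eq_vecI)
    fix i assume "i < dim_vec (0\<^sub>v (2*n) :: real vec)"
    then have i: "i < 2*n" by simp
    then have "Suc i \<in> {1..2*n}" by simp
    then have "c (Suc i) = 0" using \<open>\<forall>i\<in>{1..2*n}. c i = 0\<close> by blast
    then show "x $ i = 0\<^sub>v (2*n) $ i" using i unfolding c_def by simp
  qed (use x in simp)
qed

lemma Vm_inv:
  assumes b: "is_basis n v"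
  shows "\<exists>Vi. Vi \<in> carrier_mat (2*n) (2*n) \<and> Vi * Vm n v = 1\<^sub>m (2*n) \<and> Vm n v * Vi = 1\<^sub>m (2*n)"
proof -
  have "det (Vm n v) \<noteq> 0"
    using det_0_iff_vec_prod_zero[OF Vm_carrier[of n v]] Vm_inj[OF b] by blast
  then have "Vm n v \<in> Units (ring_mat TYPE(real) (2*n) ())"
    by (rule det_non_zero_imp_unit[OF Vm_carrier])
  then show ?thesis unfolding Units_def ring_mat_def by auto
qed


theorem mainTheorem15:
  fixes n :: nat and A B :: "real mat" and v w :: "nat \<Rightarrow> real vec"
  assumes "A \<in> skew_inv n" and "B \<in> skew_inv n"
    and "symplectic_basis n A v" and "symplectic_basis n B w"
    and "\<forall>i j. 1 \<le> i \<and> i < j \<and> j \<le> 2*n \<longrightarrow>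
           bform (v i) (J_mat n) (v j) = bform (w i) (J_mat n) (w j)"
  shows "\<exists>P \<in> Sp n. A = transpose_mat P * B * P"
proof -
  have Ac: "A \<in> carrier_mat (2*n) (2*n)" and Bc: "B \<in> carrier_mat (2*n) (2*n)"
    using assms(1,2) unfolding skew_inv_def by auto
  have bv: "is_basis n v" and bw: "is_basis n w"
    using assms(3,4) unfolding symplectic_basis_def by auto
  have Vv: "\<And>c. c < 2*n \<Longrightarrow> v (Suc c) \<in> carrier_vec (2*n)" using basis_carrier[OF bv] by blast
  have Vw: "\<And>c. c < 2*n \<Longrightarrow> w (Suc c) \<in> carrier_vec (2*n)" using basis_carrier[OF bw] by blast
  have GA: "transpose_mat (Vm n v) * A * Vm n v = J_mat n" by (rule gram_J[OF assms(1,3)])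
  have GB: "transpose_mat (Vm n w) * B * Vm n w = J_mat n" by (rule gram_J[OF assms(2,4)])
  have Jc: "J_mat n \<in> carrier_mat (2*n) (2*n)" by (rule J_carrier)
  have HJ: "transpose_mat (Vm n v) * J_mat n * Vm n v = transpose_mat (Vm n w) * J_mat n * Vm n w"
  proof (rule skew_eq[of _ "2*n"])
    show "transpose_mat (Vm n v) * J_mat n * Vm n v \<in> carrier_mat (2*n) (2*n)"
      using Vm_carrier Jc by (meson mult_carrier_mat transpose_carrier_mat)
    show "transpose_mat (Vm n w) * J_mat n * Vm n w \<in> carrier_mat (2*n) (2*n)"
      using Vm_carrier Jc by (meson mult_carrier_mat transpose_carrier_mat)
    show "\<And>r c. r < 2*n \<Longrightarrow> c < 2*n \<Longrightarrow> (transpose_mat (Vm n v) * J_mat n * Vm n v) $$ (r,c) = - (transpose_mat (Vm n v) * J_mat n * Vm n v) $$ (c,r)"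
      using gram_skew[of n v, OF Vv Jc J_skew] by blast
    show "\<And>r c. r < 2*n \<Longrightarrow> c < 2*n \<Longrightarrow> (transpose_mat (Vm n w) * J_mat n * Vm n w) $$ (r,c) = - (transpose_mat (Vm n w) * J_mat n * Vm n w) $$ (c,r)"
      using gram_skew[of n w, OF Vw Jc J_skew] by blast
    fix r c assume rc: "r < c" and c: "c < 2*n"
    have r: "r < 2*n" using rc c by simp
    have "bform (v (Suc r)) (J_mat n) (v (Suc c)) = bform (w (Suc r)) (J_mat n) (w (Suc c))"
      using assms(5) rc c by auto
    then show "(transpose_mat (Vm n v) * J_mat n * Vm n v) $$ (r,c) = (transpose_mat (Vm n w) * J_mat n * Vm n w) $$ (r,c)"
      using gram_entry'[of n v, OF Vv Jc r c] gram_entry'[of n w, OF Vw Jc r c] by simp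
  qed
  obtain Vi where Vi: "Vi \<in> carrier_mat (2*n) (2*n)" and ViV: "Vi * Vm n v = 1\<^sub>m (2*n)"
    and VVi: "Vm n v * Vi = 1\<^sub>m (2*n)" using Vm_inv[OF bv] by blast
  define P where "P = Vm n w * Vi"
  have Pc: "P \<in> carrier_mat (2*n) (2*n)" unfolding P_def using Vm_carrier[of n w] Vi by (rule mult_carrier_mat)
  have one: "\<And>M. M \<in> carrier_mat (2*n) (2*n) \<Longrightarrow> transpose_mat (1\<^sub>m (2*n)) * M * 1\<^sub>m (2*n) = (M :: real mat)"
    by simp
  have "transpose_mat P * B * P = transpose_mat Vi * J_mat n * Vi"
    unfolding P_def using congr_mult[OF Vm_carrier Vi Bc] GB by simp
  also have "\<dots> = transpose_mat (Vm n v * Vi) * A * (Vm n v * Vi)"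
    using congr_mult[OF Vm_carrier Vi Ac] GA by simp
  also have "\<dots> = A" using VVi one[OF Ac] by simp
  finally have 1: "A = transpose_mat P * B * P" by simp
  have "transpose_mat P * J_mat n * P = transpose_mat Vi * (transpose_mat (Vm n w) * J_mat n * Vm n w) * Vi"
    unfolding P_def using congr_mult[OF Vm_carrier Vi Jc] by simp
  also have "\<dots> = transpose_mat (Vm n v * Vi) * J_mat n * (Vm n v * Vi)"
    using congr_mult[OF Vm_carrier Vi Jc] HJ by simp
  also have "\<dots> = J_mat n" using VVi one[OF Jc] by simp
  finally have "P \<in> Sp n" unfolding Sp_def using Pc by simp
  with 1 show ?thesis by blast
qed

end
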